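(* Let $m\ge 3$ and $n$ be integers, and let $k$ be an integer with $1\le k\le n^2-3n+2$. Write $k=(n-1)q+r$ with integers $q\ge 0$ and $1\le r\le n-1$. Let $M_1=(\mu_{ij})$ be the $n\times n$ $0/1$ matrix with $\mu_{1,n-1}=\mu_{1,n}=1$, $\mu_{i,i-1}=1$ for $2\le i\le n$, and all other entries $0$. Let $\mathbb{A}_k=(a^{(k)}_{i_1\ldots i_m})$ be the order $m$, dimension $n$ nonnegative tensor with: (a) $a^{(k)}_{ij\ldots j}=\mu_{ij}$ for all $i,j\in[n]$; (b) $a^{(k)}_{ii_2\ldots i_m}=1$ whenever $i\in[n]\setminus\{r-q,r-q+1,\ldots,r,r+1\}\pmod n$ and the set of distinct values among $i_2,\ldots,i_m$ equals $\{r-q-1,r\}\pmod n$; (c) all other entries equal $0$. Then (i) $\gamma_j(\mathbb{A}_k)=k+n-j$ for $j=1,\ldots,n-1$ and $\gamma_n(\mathbb{A}_k)=k+n$; (ii) $\gamma(\mathbb{A}_k)=k+n$.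
   Context: Tensors of order $m$ and dimension $n$ have entries indexed by $[n]^m$, $[n]=\{1,\ldots,n\}$. For an integer $a$, $|a|_n$ denotes the least positive integer congruent to $a$ modulo $n$, and for integers $a_1,\ldots,a_s$ the notation $\{a_1,\ldots,a_s\}\pmod n$ means the set $\{|a_1|_n,\ldots,|a_s|_n\}\subseteq[n]$. General product: for a tensor $\mathbb{A}$ of order $m\ge2$ and $\mathbb{B}$ of order $k\ge1$, both of dimension $n$, $\mathbb{A}\mathbb{B}$ is the tensor of order $(m-1)(k-1)+1$ with entries $(\mathbb{A}\mathbb{B})_{i\alpha_1\ldots\alpha_{m-1}}=\sum_{i_2,\ldots,i_m=1}^n a_{ii_2\ldots i_m}b_{i_2\alpha_1}\cdots b_{i_m\alpha_{m-1}}$ ($i\in[n]$, $\alpha_1,\ldots,\alpha_{m-1}\in[n]^{k-1}$); this product is associative, and $\mathbb{A}^k$ denotes the $k$-fold product. The majorization matrix $M(\mathbb{C})$ of a tensor $\mathbb{C}$ is the $n\times n$ matrix with $(M(\mathbb{C}))_{ij}=c_{ij\ldots j}$. For $j\in[n]$, a nonnegative tensor $\mathbb{A}$ is $j$-primitive if there is $k\ge1$ with $(M(\mathbb{A}^k))_{uj}>0$ for all $u\in[n]$; the least such $k$ is $\gamma_j(\mathbb{A})$. $\mathbb{A}$ is primitive if there is $r\ge1$ with $M(\mathbb{A}^r)>0$ entrywise, and the least such $r$ is the primitive degree $\gamma(\mathbb{A})$ (equivalently, the least $r$ with $T_{\mathbb{A}}^r(x)>0$ for all nonnegative nonzero $x$,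 where $T_{\mathbb{A}}(x)=(\mathbb{A}x)^{[1/(m-1)]}$). *)

theory Defs
  imports Complex_Main
begin

text \<open>Tensors of dimension n are functions from index lists to reals; indices range
over {1..n}. The order is carried as an explicit parameter.\<close>

type_synonym tensor = "nat list \<Rightarrow> real"

definition idx_lists :: "nat \<Rightarrow> nat \<Rightarrow> nat list set" where
  "idx_lists n l = {xs. length xs = l \<and> set xs \<subseteq> {1..n}}"

text \<open>General product: A of order m, B of order k, both of dimension n.
  The result has order (m-1)(k-1)+1; an index list i # rest is split into
  the blocks alpha_1, ..., alpha_(m-1) of length k-1.\<close>
definition tprod :: "nat \<Rightarrow> nat \<Rightarrow> nat \<Rightarrow> tensor \<Rightarrow> tensor \<Rightarrow> tensor" where
  "tprod n m k A B = (\<lambda>idx.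
     \<Sum>is\<in>idx_lists n (m - 1).
        A (hd idx # is) *
        (\<Prod>j<m - 1. B (is ! j # take (k - 1) (drop (j * (k - 1)) (tl idx)))))"

fun tpow :: "nat \<Rightarrow> nat \<Rightarrow> tensor \<Rightarrow> nat \<Rightarrow> tensor" where
  "tpow n m A 0 = A"
| "tpow n m A (Suc 0) = A"
| "tpow n m A (Suc (Suc k)) = tprod n m ((m - 1) ^ Suc k + 1) A (tpow n m A (Suc k))"

definition tpow_order :: "nat \<Rightarrow> nat \<Rightarrow> nat" where
  "tpow_order m k = (m - 1) ^ k + 1"

definition maj :: "nat \<Rightarrow> tensor \<Rightarrow> nat \<Rightarrow> nat \<Rightarrow> real" where
  "maj ord C i j = C (i # replicate (ord - 1) j)"

definition j_primitive :: "nat \<Rightarrow> nat \<Rightarrow> tensor \<Rightarrow> nat \<Rightarrow> bool" where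
  "j_primitive n m A j \<longleftrightarrow> (\<exists>k\<ge>1. \<forall>u\<in>{1..n}. maj (tpow_order m k) (tpow n m A k) u j > 0)"

definition gamma_j :: "nat \<Rightarrow> nat \<Rightarrow> tensor \<Rightarrow> nat \<Rightarrow> nat" where
  "gamma_j n m A j = (LEAST k. k \<ge> 1 \<and> (\<forall>u\<in>{1..n}. maj (tpow_order m k) (tpow n m A k) u j > 0))"

definition primitive :: "nat \<Rightarrow> nat \<Rightarrow> tensor \<Rightarrow> bool" where
  "primitive n m A \<longleftrightarrow> (\<exists>r\<ge>1. \<forall>u\<in>{1..n}. \<forall>j\<in>{1..n}. maj (tpow_order m r) (tpow n m A r) u j > 0)"

definition prim_degree :: "nat \<Rightarrow> nat \<Rightarrow> tensor \<Rightarrow> nat" where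
  "prim_degree n m A = (LEAST r. r \<ge> 1 \<and> (\<forall>u\<in>{1..n}. \<forall>j\<in>{1..n}. maj (tpow_order m r) (tpow n m A r) u j > 0))"

text \<open>|a|_n: least positive integer congruent to a modulo n.\<close>
definition modn :: "nat \<Rightarrow> int \<Rightarrow> nat" where
  "modn n a = nat ((a - 1) mod int n + 1)"

definition mu1 :: "nat \<Rightarrow> nat \<Rightarrow> nat \<Rightarrow> bool" where
  "mu1 n i j \<longleftrightarrow> (i = 1 \<and> (j = n - 1 \<or> j = n)) \<or> (2 \<le> i \<and> i \<le> n \<and> j = i - 1)"

text \<open>The tensor A_k (with k = (n-1)q + r); only entries with indices in [n] matter.\<close>
definition tensorA :: "nat \<Rightarrow> int \<Rightarrow> int \<Rightarrow> tensor" where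
  "tensorA n q r = (\<lambda>idx.
     if set idx \<subseteq> {1..n} \<and> idx \<noteq> [] then
       (let i = hd idx; t = tl idx in
        if t \<noteq> [] \<and> set t = {hd t} then (if mu1 n i (hd t) then 1 else 0)
        else if i \<notin> modn n ` {r - q .. r + 1} \<and> set t = modn n ` {r - q - 1, r} then 1
        else 0)
     else 0)"

end

theory Submission
  imports Defs
begin



lemma finite_idx: "finite (idx_lists n l)"
proof -
  have "idx_lists n l = {xs. set xs \<subseteq> {1..n} \<and> length xs = l}"
    unfolding idx_lists_def by auto
  then show ?thesis using finite_lists_length_eq[of "{1..n}" l] by simp
qed

lemma tpow_nonneg: "(\<forall>xs. A xs \<ge> 0) \<Longrightarrow> tpow n m A k xs \<ge> 0"
  by (induction n m A k arbitrary: xs rule: tpow.induct)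
     (auto simp: tprod_def intro!: sum_nonneg prod_nonneg mult_nonneg_nonneg)

lemma take_drop_rep: "l < M \<Longrightarrow> take P (drop (l*P) (replicate (M*P) j)) = replicate P j"
proof -
  assume "l < M"
  then obtain d where "M = Suc (l + d)" using less_imp_Suc_add by blast
  then have "M*P - l*P = P + d*P" by (simp add: algebra_simps)
  then show ?thesis by (simp add: min_def)
qed

lemma maj_step: "maj (tpow_order m (Suc (Suc k))) (tpow n m A (Suc (Suc k))) u j =
  (\<Sum>xs\<in>idx_lists n (m-1). A (u # xs) * (\<Prod>l<m-1. maj (tpow_order m (Suc k)) (tpow n m A (Suc k)) (xs!l) j))"
proof -
  let ?P = "(m-1)^(Suc k)"
  have e: "\<And>l. l \<in> {..<m-1} \<Longrightarrow> take ?P (drop (l*?P) (replicate ((m-1)^(Suc (Suc k))) j)) = replicate ?P j"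
    using take_drop_rep[where M="m-1" and P="?P"] by (simp add: power_Suc mult.commute)
  show ?thesis
    unfolding maj_def tpow_order_def
    apply (simp only: tpow.simps tprod_def list.sel add_diff_cancel_right')
    apply (rule sum.cong[OF refl])
    apply (rule arg_cong[where f="\<lambda>x. _ * x"])
    apply (rule prod.cong[OF refl])
    apply (simp only: e)
    done
qed

lemma sum_pos_iff: "finite S \<Longrightarrow> (\<And>x. x\<in>S \<Longrightarrow> f x \<ge> (0::real)) \<Longrightarrow> (sum f S > 0 \<longleftrightarrow> (\<exists>x\<in>S. f x > 0))"
proof
  assume f: "finite S" and nn: "\<And>x. x\<in>S \<Longrightarrow> f x \<ge> 0" and p: "sum f S > 0"
  show "\<exists>x\<in>S. f x > 0"
  proof (rule ccontr)
    assume "\<not> ?thesis"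
    then have "\<forall>x\<in>S. f x = 0" using nn by force
    then have "sum f S = 0" by simp
    then show False using p by linarith
  qed
next
  assume f: "finite S" and nn: "\<And>x. x\<in>S \<Longrightarrow> f x \<ge> 0" and "\<exists>x\<in>S. f x > 0"
  then obtain x where "x\<in>S" "f x > 0" by blast
  then have "f x \<le> sum f S" using member_le_sum[of x S f] f nn by blast
  then show "sum f S > 0" using \<open>f x > 0\<close> by linarith
qed

lemma prod_pos_iff: "(\<And>x. x<(M::nat) \<Longrightarrow> f x \<ge> (0::real)) \<Longrightarrow> ((\<Prod>l<M. f l) > 0 \<longleftrightarrow> (\<forall>l<M. f l > 0))"
proof
  assume h: "\<And>x. x<M \<Longrightarrow> f x \<ge> 0" and p: "(\<Prod>l<M. f l) > 0"
  show "\<forall>l<M. f l > 0"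
  proof (intro allI impI)
    fix l assume "l < M"
    have "f l \<noteq> 0"
    proof
      assume "f l = 0"
      then have "prod f {..<M} = 0" using \<open>l<M\<close> by (intro prod_zero) auto
      then show False using p by linarith
    qed
    then show "f l > 0" using h[OF \<open>l<M\<close>] by auto
  qed
qed (auto intro: prod_pos)

lemma pos_step:
  assumes nn: "\<forall>xs. A xs \<ge> 0"
  shows "maj (tpow_order m (Suc (Suc k))) (tpow n m A (Suc (Suc k))) u j > 0 \<longleftrightarrow>
    (\<exists>xs\<in>idx_lists n (m-1). A (u # xs) > 0 \<and> (\<forall>x\<in>set xs. maj (tpow_order m (Suc k)) (tpow n m A (Suc k)) x j > 0))"
proof -
  let ?B = "\<lambda>x. maj (tpow_order m (Suc k)) (tpow n m A (Suc k)) x j"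
  have bnn: "\<And>x. ?B x \<ge> 0" unfolding maj_def using tpow_nonneg[OF nn] by blast
  have pp: "\<And>xs. (\<Prod>l<m-1. ?B (xs!l)) > 0 \<longleftrightarrow> (\<forall>l<m-1. ?B (xs!l) > 0)"
    by (rule prod_pos_iff) (use bnn in auto)
  have "(\<Sum>xs\<in>idx_lists n (m-1). A (u # xs) * (\<Prod>l<m-1. ?B (xs!l))) > 0 \<longleftrightarrow>
        (\<exists>xs\<in>idx_lists n (m-1). A (u # xs) * (\<Prod>l<m-1. ?B (xs!l)) > 0)"
    by (rule sum_pos_iff[OF finite_idx]) (use nn bnn in \<open>auto intro!: mult_nonneg_nonneg prod_nonneg\<close>)
  also have "\<dots> \<longleftrightarrow> (\<exists>xs\<in>idx_lists n (m-1). A (u # xs) > 0 \<and> (\<forall>x\<in>set xs. ?B x > 0))"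
  proof (rule bex_cong[OF refl])
    fix xs assume "xs \<in> idx_lists n (m-1)"
    then have len: "length xs = m - 1" by (simp add: idx_lists_def)
    have pn: "(\<Prod>l<m-1. ?B (xs!l)) \<ge> 0" using bnn by (auto intro: prod_nonneg)
    have "A (u # xs) * (\<Prod>l<m-1. ?B (xs!l)) > 0 \<longleftrightarrow> A (u # xs) > 0 \<and> (\<Prod>l<m-1. ?B (xs!l)) > 0"
      using nn pn by (auto simp: zero_less_mult_iff)
    also have "\<dots> \<longleftrightarrow> A (u # xs) > 0 \<and> (\<forall>x\<in>set xs. ?B x > 0)"
      using pp[of xs] len by (auto simp: all_set_conv_all_nth)
    finally show "A (u # xs) * (\<Prod>l<m-1. ?B (xs!l)) > 0 \<longleftrightarrow> A (u # xs) > 0 \<and> (\<forall>x\<in>set xs. ?B x > 0)" .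
  qed
  finally show ?thesis by (simp only: maj_step)
qed




locale TS =
  fixes n m k :: nat and q r :: int
  assumes m3: "m \<ge> 3" and n1: "n \<ge> 1"
    and k1: "1 \<le> k" and kb: "int k \<le> int n ^ 2 - 3 * int n + 2"
    and kq: "int k = (int n - 1) * q + r" and q0: "q \<ge> 0" and r1: "1 \<le> r" and rn: "r \<le> int n - 1"
begin

lemma n3: "n \<ge> 3"
proof (rule ccontr)
  assume "\<not> n \<ge> 3"
  then have "n = 1 \<or> n = 2" using n1 by auto
  then show False using kb k1 by auto
qed

lemma qb: "q \<le> int n - 3"
proof (rule ccontr)
  assume "\<not> q \<le> int n - 3"
  then have "q \<ge> int n - 2" by simp
  moreover have "int n - 1 \<ge> 0" using n1 by simp
  ultimately have "(int n - 1) * q \<ge> (int n - 1) * (int n - 2)" by (rule mult_left_mono)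
  moreover have "int n ^ 2 - 3 * int n + 2 = (int n - 1) * (int n - 2)" by (simp add: algebra_simps power2_eq_square)
  ultimately show False using kb kq r1 by linarith
qed

lemma modn_val: "1 - int n \<le> x \<Longrightarrow> x \<le> int n \<Longrightarrow> int (modn n x) = (if x \<ge> 1 then x else x + int n)"
proof -
  assume a: "1 - int n \<le> x" "x \<le> int n"
  show ?thesis
  proof (cases "x \<ge> 1")
    case True
    then have "(x - 1) mod int n = x - 1" using a by (intro mod_pos_pos_trivial) auto
    then show ?thesis using True by (simp add: modn_def)
  next
    case False
    have "(x - 1) mod int n = (x - 1 + int n) mod int n" by simp
    also have "\<dots> = x - 1 + int n" using a False by (intro mod_pos_pos_trivial) auto
    finally show ?thesis using False a by (simp add: modn_def)
  qed
qed

definition al :: nat where "al = modn n (r - q - 1)"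
definition be :: nat where "be = modn n r"
definition EE :: "nat set" where "EE = modn n ` {r - q .. r + 1}"

lemma al_int: "int al = (if r - q - 1 \<ge> 1 then r - q - 1 else r - q - 1 + int n)"
  unfolding al_def using modn_val[of "r - q - 1"] qb q0 r1 rn by auto

lemma be_int: "int be = r"
  unfolding be_def using modn_val[of r] r1 rn by auto

lemma al_range: "al \<in> {1..n}"
proof -
  have "1 \<le> int al \<and> int al \<le> int n" using al_int qb q0 r1 rn by (auto split: if_splits)
  then show ?thesis by auto
qed
lemma be_range: "be \<in> {1..n}" using be_int r1 rn by auto
lemma al_be: "al \<noteq> be"
proof -
  have "int al \<noteq> int be" using al_int be_int qb q0 r1 rn by (auto split: if_splits)
  then show ?thesis by auto
qed

lemma EE_iff: "u \<in> {1..n} \<Longrightarrow> (u \<in> EE \<longleftrightarrow> (r - q \<le> int u \<and> int u \<le> r + 1) \<or> r - q \<le> int u - int n)"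
proof -
  assume u: "u \<in> {1..n}"
  show ?thesis
  proof
    assume "u \<in> EE"
    then obtain x where x: "x \<in> {r - q .. r + 1}" "u = modn n x" unfolding EE_def by auto
    then have "int u = (if x \<ge> 1 then x else x + int n)"
      using modn_val[of x] qb q0 r1 rn by auto
    then show "(r - q \<le> int u \<and> int u \<le> r + 1) \<or> r - q \<le> int u - int n"
      using x(1) by (auto split: if_splits)
  next
    assume h: "(r - q \<le> int u \<and> int u \<le> r + 1) \<or> r - q \<le> int u - int n"
    show "u \<in> EE"
    proof (cases "r - q \<le> int u \<and> int u \<le> r + 1")
      case True
      have "int (modn n (int u)) = int u" using modn_val[of "int u"] u by auto
      then have "modn n (int u) = u" by simp
      then show ?thesis unfolding EE_def using True by (auto intro!: image_eqI[where x="int u"])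
    next
      case False
      then have h2: "r - q \<le> int u - int n" using h by auto
      have "int (modn n (int u - int n)) = int u" using modn_val[of "int u - int n"] u by auto
      then have "modn n (int u - int n) = u" by simp
      moreover have "int u - int n \<in> {r - q .. r + 1}" using h2 u r1 by auto
      ultimately show ?thesis unfolding EE_def by (auto intro!: image_eqI[where x="int u - int n"])
    qed
  qed
qed

definition G :: "nat set \<Rightarrow> nat set" where
  "G S = {u\<in>{1..n}. (\<exists>j\<in>S. mu1 n u j) \<or> (u \<notin> EE \<and> al \<in> S \<and> be \<in> S)}"

lemma tA_nonneg: "\<forall>xs. tensorA n q r xs \<ge> 0"
  unfolding tensorA_def by (auto simp: Let_def)

lemma tA_pos:
  assumes xs: "xs \<in> idx_lists n (m-1)" and u: "u \<in> {1..n}"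
  shows "tensorA n q r (u # xs) > 0 \<longleftrightarrow> (set xs = {hd xs} \<and> mu1 n u (hd xs)) \<or> (u \<notin> EE \<and> set xs = {al, be})"
proof -
  have len: "length xs = m - 1" and sx: "set xs \<subseteq> {1..n}" using xs by (auto simp: idx_lists_def)
  have ne: "xs \<noteq> []" using len m3 by auto
  have img: "modn n ` {r - q - 1, r} = {al, be}" by (simp add: al_def be_def)
  have d: "set xs = {al, be} \<Longrightarrow> set xs \<noteq> {hd xs}" using al_be by (metis insert_subset singleton_iff subset_insertI insertI1)
  show ?thesis
    using sx u ne d unfolding tensorA_def img EE_def[symmetric] by (auto simp: Let_def)
qed

end


context TS begin

lemma G_sub: "G S \<subseteq> {1..n}" unfolding G_def by auto

lemma lemB:
  assumes u: "u \<in> {1..n}" and S: "S \<subseteq> {1..n}"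
  shows "(\<exists>xs\<in>idx_lists n (m-1). tensorA n q r (u # xs) > 0 \<and> set xs \<subseteq> S) \<longleftrightarrow> u \<in> G S"
proof
  assume "\<exists>xs\<in>idx_lists n (m-1). tensorA n q r (u # xs) > 0 \<and> set xs \<subseteq> S"
  then obtain xs where xs: "xs \<in> idx_lists n (m-1)" "tensorA n q r (u # xs) > 0" "set xs \<subseteq> S" by blast
  have ne: "xs \<noteq> []" using xs(1) m3 by (auto simp: idx_lists_def)
  then have "hd xs \<in> S" using xs(3) by auto
  then show "u \<in> G S" using tA_pos[OF xs(1) u] xs u unfolding G_def by auto
next
  assume "u \<in> G S"
  then consider (a) j where "j \<in> S" "mu1 n u j" | (b) "u \<notin> EE" "al \<in> S" "be \<in> S"
    unfolding G_def by auto
  then show "\<exists>xs\<in>idx_lists n (m-1). tensorA n q r (u # xs) > 0 \<and> set xs \<subseteq> S"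
  proof cases
    case a
    let ?xs = "replicate (m-1) j"
    have sx: "set ?xs = {j}" using m3 by auto
    have i: "?xs \<in> idx_lists n (m-1)" using a S sx by (auto simp: idx_lists_def)
    have h: "hd ?xs = j" using m3 by (cases "m - 1") auto
    have "set ?xs = {hd ?xs} \<and> mu1 n u (hd ?xs)" using sx h a by simp
    then have "tensorA n q r (u # ?xs) > 0" using tA_pos[OF i u] by blast
    moreover have "set ?xs \<subseteq> S" using sx a by simp
    ultimately show ?thesis using i by blast
  next
    case b
    let ?xs = "al # replicate (m-2) be"
    have sx: "set ?xs = {al, be}" using m3 by auto
    have i: "?xs \<in> idx_lists n (m-1)" using al_range be_range sx m3 by (auto simp: idx_lists_def)
    have "tensorA n q r (u # ?xs) > 0" using tA_pos[OF i u] b sx by blast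
    moreover have "set ?xs \<subseteq> S" using sx b by simp
    ultimately show ?thesis using i by blast
  qed
qed

abbreviation P :: "nat \<Rightarrow> nat \<Rightarrow> nat \<Rightarrow> bool" where
  "P t u j \<equiv> maj (tpow_order m t) (tpow n m (tensorA n q r) t) u j > 0"

lemma pos1: "u \<in> {1..n} \<Longrightarrow> j \<in> {1..n} \<Longrightarrow> P 1 u j \<longleftrightarrow> mu1 n u j"
proof -
  assume u: "u \<in> {1..n}" and j: "j \<in> {1..n}"
  have o: "tpow_order m 1 - 1 = m - 1" by (simp add: tpow_order_def)
  let ?xs = "replicate (m-1) j"
  have sx: "set ?xs = {j}" using m3 by auto
  have i: "?xs \<in> idx_lists n (m-1)" using j sx by (auto simp: idx_lists_def)
  have h: "hd ?xs = j" using m3 by (cases "m - 1") auto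
  have e: "maj (tpow_order m 1) (tpow n m (tensorA n q r) 1) u j = tensorA n q r (u # ?xs)"
    by (simp add: maj_def tpow_order_def)
  have ne: "{j} \<noteq> {al, be}" using al_be by auto
  show ?thesis unfolding e tA_pos[OF i u] sx h using ne by auto
qed

lemma posSS: "u \<in> {1..n} \<Longrightarrow> P (Suc (Suc t)) u j \<longleftrightarrow> u \<in> G {x\<in>{1..n}. P (Suc t) x j}"
proof -
  assume u: "u \<in> {1..n}"
  have "P (Suc (Suc t)) u j \<longleftrightarrow> (\<exists>xs\<in>idx_lists n (m-1). tensorA n q r (u # xs) > 0 \<and> (\<forall>x\<in>set xs. P (Suc t) x j))"
    by (rule pos_step[OF tA_nonneg])
  also have "\<dots> \<longleftrightarrow> (\<exists>xs\<in>idx_lists n (m-1). tensorA n q r (u # xs) > 0 \<and> set xs \<subseteq> {x\<in>{1..n}. P (Suc t) x j})"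
  proof (rule bex_cong[OF refl])
    fix xs assume "xs \<in> idx_lists n (m-1)"
    then have "set xs \<subseteq> {1..n}" by (simp add: idx_lists_def)
    then show "(tensorA n q r (u # xs) > 0 \<and> (\<forall>x\<in>set xs. P (Suc t) x j)) \<longleftrightarrow>
       (tensorA n q r (u # xs) > 0 \<and> set xs \<subseteq> {x\<in>{1..n}. P (Suc t) x j})" by blast
  qed
  also have "\<dots> \<longleftrightarrow> u \<in> G {x\<in>{1..n}. P (Suc t) x j}" by (rule lemB[OF u]) auto
  finally show ?thesis .
qed

lemma Sk_eq: "j \<in> {1..n} \<Longrightarrow> {u\<in>{1..n}. P (Suc t) u j} = (G^^(Suc t)) {j}"
proof (induction t)
  case 0
  show ?case
  proof -
    have "{u\<in>{1..n}. P 1 u j} = {u\<in>{1..n}. mu1 n u j}" using pos1 0 by auto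
    also have "\<dots> = G {j}" unfolding G_def using al_be by auto
    finally show ?thesis by simp
  qed
next
  case (Suc t)
  have "{u\<in>{1..n}. P (Suc (Suc t)) u j} = G {x\<in>{1..n}. P (Suc t) x j}"
  proof (rule set_eqI)
    fix u
    show "u \<in> {u\<in>{1..n}. P (Suc (Suc t)) u j} \<longleftrightarrow> u \<in> G {x\<in>{1..n}. P (Suc t) x j}"
    proof (cases "u \<in> {1..n}")
      case True then show ?thesis using posSS[OF True, of t j] by blast
    next
      case False then show ?thesis using G_sub by blast
    qed
  qed
  also have "\<dots> = (G^^(Suc (Suc t))) {j}" using Suc by simp
  finally show ?case .
qed

lemma full_iff: "t \<ge> 1 \<Longrightarrow> j \<in> {1..n} \<Longrightarrow> (\<forall>u\<in>{1..n}. P t u j) \<longleftrightarrow> (G^^t) {j} = {1..n}"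
proof -
  assume t: "t \<ge> 1" and j: "j \<in> {1..n}"
  then obtain t' where t': "t = Suc t'" by (cases t) auto
  have "(G^^t) {j} = {u\<in>{1..n}. P t u j}" using Sk_eq[OF j, of t'] t' by simp
  then show ?thesis by auto
qed

end


context TS begin

definition I :: "int \<Rightarrow> int \<Rightarrow> nat set" where
  "I c s = {u\<in>{1..n}. (int u \<le> s \<and> s - int u \<le> c+1) \<or> (s < int u \<and> s + int n - int u \<le> c+1)}"

lemma ex_mu1: "u \<in> {1..n} \<Longrightarrow> (\<exists>j\<in>X. mu1 n u j) \<longleftrightarrow> (u = 1 \<and> (n-1 \<in> X \<or> n \<in> X)) \<or> (2 \<le> u \<and> u - 1 \<in> X)"
  by (auto simp: mu1_def)

lemma memI: "u \<in> {1..n} \<Longrightarrow> u \<in> I c s \<longleftrightarrow> (int u \<le> s \<and> s - int u \<le> c+1) \<or> (s < int u \<and> s + int n - int u \<le> c+1)"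
  by (simp add: I_def)

lemma mat_step:
  assumes c: "-1 \<le> c" "c \<le> int n - 3" and s: "1 \<le> s" "s \<le> int n - 1"
    and u: "u \<in> {1..n}"
  shows "(\<exists>j\<in>I c s. mu1 n u j) \<longleftrightarrow> u \<in> (if s \<le> int n - 2 then I c (s+1) else I (c+1) 1)"
proof -
  have r1: "n - 1 \<in> {1..n}" "n \<in> {1..n}" using n3 by auto
  have i1: "int (n - 1) = int n - 1" using n3 by simp
  have R: "u \<in> (if s \<le> int n - 2 then I c (s+1) else I (c+1) 1) \<longleftrightarrow>
     (if s \<le> int n - 2 then (int u \<le> s+1 \<and> s+1 - int u \<le> c+1) \<or> (s+1 < int u \<and> s+1 + int n - int u \<le> c+1)
      else (int u \<le> 1 \<and> 1 - int u \<le> c+2) \<or> (1 < int u \<and> 1 + int n - int u \<le> c+2))"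
    using memI[OF u] by (simp add: algebra_simps)
  show ?thesis
  proof (cases "u = 1")
    case True
    have "(\<exists>j\<in>I c s. mu1 n u j) \<longleftrightarrow> (n-1 \<in> I c s \<or> n \<in> I c s)" using ex_mu1[OF u] True by simp
    also have "\<dots> \<longleftrightarrow> ((int n - 1 \<le> s \<and> s - (int n - 1) \<le> c+1) \<or> (s < int n - 1 \<and> s + int n - (int n - 1) \<le> c+1))
        \<or> ((int n \<le> s \<and> s - int n \<le> c+1) \<or> (s < int n \<and> s + int n - int n \<le> c+1))"
      using memI[OF r1(1)] memI[OF r1(2)] i1 by simp
    finally show ?thesis unfolding R using True c s by auto
  next
    case False
    then have u2: "2 \<le> u" using u by auto
    then have r3: "u - 1 \<in> {1..n}" using u by auto
    have i3: "int (u - 1) = int u - 1" using u2 by simp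
    have "(\<exists>j\<in>I c s. mu1 n u j) \<longleftrightarrow> u - 1 \<in> I c s" using ex_mu1[OF u] False u2 by simp
    also have "\<dots> \<longleftrightarrow> (int u - 1 \<le> s \<and> s - (int u - 1) \<le> c+1) \<or> (s < int u - 1 \<and> s + int n - (int u - 1) \<le> c+1)"
      using memI[OF r3] i3 by simp
    finally show ?thesis unfolding R using u2 u c s by auto
  qed
qed

lemma G_step:
  assumes c: "-1 \<le> c" and s: "1 \<le> s" "s \<le> int n - 1" and cq: "c < q \<or> (c = q \<and> s < r)"
  shows "G (I c s) = (if s \<le> int n - 2 then I c (s+1) else I (c+1) 1)"
proof (rule set_eqI)
  fix u
  have c3: "c \<le> int n - 3" using cq qb by auto
  let ?R = "(if s \<le> int n - 2 then I c (s+1) else I (c+1) 1)"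
  have Rs: "?R \<subseteq> {1..n}" by (auto simp: I_def)
  show "u \<in> G (I c s) \<longleftrightarrow> u \<in> ?R"
  proof (cases "u \<in> {1..n}")
    case False then show ?thesis using Rs G_sub by blast
  next
    case u: True
    have extra: "u \<in> ?R" if h: "u \<notin> EE" "al \<in> I c s" "be \<in> I c s"
    proof -
      have a: "(int al \<le> s \<and> s - int al \<le> c+1) \<or> (s < int al \<and> s + int n - int al \<le> c+1)"
        using memI[OF al_range] h by simp
      have b: "(r \<le> s \<and> s - r \<le> c+1) \<or> (s < r \<and> s + int n - r \<le> c+1)"
        using memI[OF be_range] h be_int by simp
      have e: "\<not> ((r - q \<le> int u \<and> int u \<le> r + 1) \<or> r - q \<le> int u - int n)"
        using EE_iff[OF u] h by simp
      have R: "u \<in> ?R \<longleftrightarrow>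
         (if s \<le> int n - 2 then (int u \<le> s+1 \<and> s+1 - int u \<le> c+1) \<or> (s+1 < int u \<and> s+1 + int n - int u \<le> c+1)
          else (int u \<le> 1 \<and> 1 - int u \<le> c+2) \<or> (1 < int u \<and> 1 + int n - int u \<le> c+2))"
        using memI[OF u] by (simp add: algebra_simps)
      have ui: "1 \<le> int u" "int u \<le> int n" using u by auto
      show ?thesis unfolding R using a b e al_int c s cq q0 r1 rn ui qb by (auto split: if_splits)
    qed
    show ?thesis
      using mat_step[OF c c3 s u] extra u unfolding G_def by auto
  qed
qed

end



lemma cmp:
  fixes N c s q r :: int
  assumes "N > 0" "1 \<le> s" "s \<le> N" "1 \<le> r" "r \<le> N" "N*c + s \<le> N*q + r"
  shows "c < q \<or> (c = q \<and> s \<le> r)"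
proof (rule ccontr)
  assume h: "\<not> ?thesis"
  show False
  proof (cases "c = q")
    case True then show False using h assms by auto
  next
    case False
    then have "c \<ge> q + 1" using h by auto
    then have "N*c \<ge> N*(q+1)" using assms(1) by (intro mult_left_mono) auto
    then show False using assms by (simp add: algebra_simps)
  qed
qed

context TS begin

lemma G_final: "G (I q r) = {1..n}"
proof (rule set_eqI)
  fix u
  show "u \<in> G (I q r) \<longleftrightarrow> u \<in> {1..n}"
  proof (cases "u \<in> {1..n}")
    case False then show ?thesis using G_sub by blast
  next
    case u: True
    have ab: "al \<in> I q r" "be \<in> I q r"
      using memI[OF al_range] memI[OF be_range] al_int be_int q0 r1 rn qb by (auto split: if_splits)
    have m: "(\<exists>j\<in>I q r. mu1 n u j) \<longleftrightarrow> u \<in> (if r \<le> int n - 2 then I q (r+1) else I (q+1) 1)"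
      by (rule mat_step[OF _ qb r1 rn u]) (use q0 in auto)
    have R: "u \<in> (if r \<le> int n - 2 then I q (r+1) else I (q+1) 1) \<longleftrightarrow>
         (if r \<le> int n - 2 then (int u \<le> r+1 \<and> r+1 - int u \<le> q+1) \<or> (r+1 < int u \<and> r+1 + int n - int u \<le> q+1)
          else (int u \<le> 1 \<and> 1 - int u \<le> q+2) \<or> (1 < int u \<and> 1 + int n - int u \<le> q+2))"
      using memI[OF u] by (simp add: algebra_simps)
    have ui: "1 \<le> int u" "int u \<le> int n" using u by auto
    have "u \<in> EE \<Longrightarrow> u \<in> (if r \<le> int n - 2 then I q (r+1) else I (q+1) 1)"
      unfolding R using EE_iff[OF u] ui q0 r1 rn qb by (auto split: if_splits)
    then show ?thesis using m ab u unfolding G_def by auto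
  qed
qed

lemma G_full: "G {1..n} = {1..n}"
proof -
  have "u \<in> G {1..n}" if u: "u \<in> {1..n}" for u
  proof (cases "u = 1")
    case True
    then have "mu1 n u n" by (simp add: mu1_def)
    then show ?thesis using u n1 unfolding G_def by auto
  next
    case False
    then have "mu1 n u (u - 1)" using u by (simp add: mu1_def)
    moreover have "u - 1 \<in> {1..n}" using u False by auto
    ultimately show ?thesis using u unfolding G_def by auto
  qed
  then show ?thesis using G_sub by blast
qed

lemma I_notfull: assumes "c \<le> q" "1 \<le> s" "s \<le> int n - 1" shows "I c s \<noteq> {1..n}"
proof -
  have "nat (s+1) \<in> {1..n}" using assms by auto
  moreover have "nat (s+1) \<notin> I c s" using assms qb by (auto simp: I_def)
  ultimately show ?thesis by blast
qed

definition T :: "nat \<Rightarrow> nat set" where "T t = (G^^t) {n-1}"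

lemma inv: "t \<le> k \<Longrightarrow> \<exists>c s. int t = (int n - 1)*c + s \<and> 1 \<le> s \<and> s \<le> int n - 1 \<and> -1 \<le> c \<and> T t = I c s"
proof (induction t)
  case 0
  have "I (-1) (int n - 1) = {n-1}"
  proof (rule set_eqI)
    fix u
    show "u \<in> I (-1) (int n - 1) \<longleftrightarrow> u \<in> {n-1}" using n3 by (auto simp: I_def)
  qed
  then show ?case using n3 by (intro exI[of _ "-1"] exI[of _ "int n - 1"]) (auto simp: T_def)
next
  case (Suc t)
  then obtain c s where cs: "int t = (int n - 1)*c + s" "1 \<le> s" "s \<le> int n - 1" "-1 \<le> c" "T t = I c s"
    by auto
  have lt: "int t < int k" using Suc by simp
  have "c < q \<or> (c = q \<and> s \<le> r)"
    by (rule cmp[of "int n - 1"]) (use n3 cs r1 rn lt kq in auto)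
  then have cq: "c < q \<or> (c = q \<and> s < r)" using cs(1) lt kq by auto
  have step: "T (Suc t) = (if s \<le> int n - 2 then I c (s+1) else I (c+1) 1)"
    using G_step[OF cs(4) cs(2) cs(3) cq] cs(5) by (simp add: T_def)
  show ?case
  proof (cases "s \<le> int n - 2")
    case True
    then show ?thesis using step cs by (intro exI[of _ c] exI[of _ "s+1"]) (auto simp: algebra_simps)
  next
    case False
    then have "s = int n - 1" using cs by auto
    then show ?thesis using step cs n3 False
      by (intro exI[of _ "c+1"] exI[of _ 1]) (auto simp: algebra_simps)
  qed
qed

lemma T_k: "T k = I q r"
proof -
  obtain c s where cs: "int k = (int n - 1)*c + s" "1 \<le> s" "s \<le> int n - 1" "-1 \<le> c" "T k = I c s"
    using inv by blast
  have "c < q \<or> (c = q \<and> s \<le> r)"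
    by (rule cmp[of "int n - 1"]) (use n3 cs r1 rn kq in auto)
  moreover have "q < c \<or> (q = c \<and> r \<le> s)"
    by (rule cmp[of "int n - 1"]) (use n3 cs r1 rn kq in auto)
  ultimately have "c = q" "s = r" by auto
  then show ?thesis using cs by simp
qed

lemma T_full_iff: "T t = {1..n} \<longleftrightarrow> t \<ge> k + 1"
proof
  assume h: "T t = {1..n}"
  show "t \<ge> k + 1"
  proof (rule ccontr)
    assume "\<not> ?thesis"
    then have "t \<le> k" by simp
    then obtain c s where cs: "int t = (int n - 1)*c + s" "1 \<le> s" "s \<le> int n - 1" "-1 \<le> c" "T t = I c s"
      using inv by blast
    have "c < q \<or> (c = q \<and> s \<le> r)"
      by (rule cmp[of "int n - 1"]) (use n3 cs r1 rn kq \<open>t \<le> k\<close> in auto)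
    then have "c \<le> q" by auto
    then show False using I_notfull[OF _ cs(2,3)] cs(5) h by auto
  qed
next
  assume "t \<ge> k + 1"
  then show "T t = {1..n}"
  proof (induction t)
    case 0 then show ?case by simp
  next
    case (Suc t)
    show ?case
    proof (cases "t = k")
      case True
      then show ?thesis using T_k G_final by (simp add: T_def)
    next
      case False
      then have "T t = {1..n}" using Suc by auto
      then show ?thesis using G_full by (simp add: T_def)
    qed
  qed
qed

lemma G_single: "1 \<le> x \<Longrightarrow> x \<le> n - 2 \<Longrightarrow> G {x} = {x+1}"
  unfolding G_def using al_be by (auto simp: mu1_def)

lemma G_n: "G {n} = {1}"
  unfolding G_def using al_be n3 by (auto simp: mu1_def)

lemma iter_single: "1 \<le> x \<Longrightarrow> x + i \<le> n - 1 \<Longrightarrow> (G^^i) {x} = {x+i}"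
proof (induction i)
  case 0 then show ?case by simp
next
  case (Suc i)
  then have "(G^^i) {x} = {x+i}" by simp
  then show ?case using G_single[of "x+i"] Suc.prems by simp
qed

lemma single_notfull: "{x} \<noteq> {1..n}"
proof
  assume "{x} = {1..n}"
  then have "1 \<in> {x}" "2 \<in> {x}" using n3 by auto
  then show False by simp
qed

lemma fullj_lt: assumes j: "1 \<le> j" "j \<le> n - 1"
  shows "(G^^t) {j} = {1..n} \<longleftrightarrow> t \<ge> k + n - j"
proof (cases "t < n - 1 - j")
  case True
  then have "(G^^t) {j} = {j+t}" using iter_single j by simp
  then show ?thesis using single_notfull True by auto
next
  case False
  then obtain d where d: "t = d + (n - 1 - j)" by (metis le_add_diff_inverse2 not_less)
  have "(G^^t) {j} = (G^^d) ((G^^(n-1-j)) {j})" by (simp add: d funpow_add)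
  also have "(G^^(n-1-j)) {j} = {n-1}" using iter_single[of j "n-1-j"] j by simp
  finally have "(G^^t) {j} = T d" by (simp add: T_def)
  then show ?thesis using T_full_iff d j by auto
qed

lemma fullj_n: "(G^^t) {n} = {1..n} \<longleftrightarrow> t \<ge> k + n"
proof (cases t)
  case 0 then show ?thesis using single_notfull n3 by simp
next
  case (Suc t')
  have "(G^^t) {n} = (G^^t') (G {n})" by (simp add: Suc funpow_Suc_right del: funpow.simps)
  then have "(G^^t) {n} = (G^^t') {1}" using G_n by simp
  then show ?thesis using fullj_lt[of 1 t'] n3 Suc by auto
qed

end


context TS begin

definition g :: "nat \<Rightarrow> nat" where "g j = (if j = n then k + n else k + n - j)"

lemma g_full: "j \<in> {1..n} \<Longrightarrow> t \<ge> 1 \<Longrightarrow> (\<forall>u\<in>{1..n}. P t u j) \<longleftrightarrow> t \<ge> g j"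
proof -
  assume j: "j \<in> {1..n}" and t: "t \<ge> 1"
  show ?thesis
  proof (cases "j = n")
    case True then show ?thesis using full_iff[OF t j] fullj_n by (simp add: g_def)
  next
    case False
    then have "1 \<le> j" "j \<le> n - 1" using j by auto
    then show ?thesis using full_iff[OF t j] fullj_lt[of j t] False by (simp add: g_def)
  qed
qed

lemma g_ge1: "j \<in> {1..n} \<Longrightarrow> g j \<ge> 1" using k1 by (auto simp: g_def)

lemma g_le: "j \<in> {1..n} \<Longrightarrow> g j \<le> k + n" by (simp add: g_def)

lemma all_full: "j \<in> {1..n} \<Longrightarrow> \<forall>u\<in>{1..n}. P (k+n) u j"
  using g_full[of j "k+n"] g_le[of j] k1 by simp

lemma jprim: "j \<in> {1..n} \<Longrightarrow> j_primitive n m (tensorA n q r) j"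
  unfolding j_primitive_def using g_full g_ge1 by (meson order_refl)

lemma gam: "j \<in> {1..n} \<Longrightarrow> gamma_j n m (tensorA n q r) j = g j"
  unfolding gamma_j_def
proof (rule Least_equality)
  assume j: "j \<in> {1..n}"
  show "1 \<le> g j \<and> (\<forall>u\<in>{1..n}. P (g j) u j)" using g_full[OF j g_ge1[OF j]] g_ge1[OF j] by blast
  fix y assume "1 \<le> y \<and> (\<forall>u\<in>{1..n}. P y u j)"
  then show "g j \<le> y" using g_full[OF j] by blast
qed

lemma prim: "primitive n m (tensorA n q r)"
  unfolding primitive_def
  by (rule exI[of _ "k+n"]) (use all_full k1 in auto)

lemma pdeg: "prim_degree n m (tensorA n q r) = k + n"
  unfolding prim_degree_def
proof (rule Least_equality)
  show "1 \<le> k + n \<and> (\<forall>u\<in>{1..n}. \<forall>j\<in>{1..n}. P (k+n) u j)"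
    using all_full k1 by auto
  fix y assume h: "1 \<le> y \<and> (\<forall>u\<in>{1..n}. \<forall>j\<in>{1..n}. P y u j)"
  have nn: "n \<in> {1..n}" using n1 by auto
  have "\<forall>u\<in>{1..n}. P y u n" using h nn by blast
  then have "y \<ge> g n" using g_full[OF nn] h by blast
  then show "k + n \<le> y" by (simp add: g_def)
qed

lemma main:
  "(\<forall>j\<in>{1..n - 1}. j_primitive n m (tensorA n q r) j
              \<and> gamma_j n m (tensorA n q r) j = k + n - j)
       \<and> j_primitive n m (tensorA n q r) n \<and> gamma_j n m (tensorA n q r) n = k + n
       \<and> primitive n m (tensorA n q r) \<and> prim_degree n m (tensorA n q r) = k + n"
proof -
  have nn: "n \<in> {1..n}" using n1 by auto
  have a: "\<forall>j\<in>{1..n - 1}. j_primitive n m (tensorA n q r) j \<and> gamma_j n m (tensorA n q r) j = k + n - j"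
  proof
    fix j assume j: "j \<in> {1..n-1}"
    then have j': "j \<in> {1..n}" "j \<noteq> n" by auto
    show "j_primitive n m (tensorA n q r) j \<and> gamma_j n m (tensorA n q r) j = k + n - j"
      using jprim[OF j'(1)] gam[OF j'(1)] j'(2) by (simp add: g_def)
  qed
  show ?thesis using a jprim[OF nn] gam[OF nn] prim pdeg by (simp add: g_def)
qed

end

theorem theorem3p3:
  fixes m n k :: nat and q r :: int
  assumes "m \<ge> 3" and "n \<ge> 1"
    and "1 \<le> k" and "int k \<le> int n ^ 2 - 3 * int n + 2"
    and "int k = (int n - 1) * q + r" and "q \<ge> 0" and "1 \<le> r" and "r \<le> int n - 1"
  shows "(\<forall>j\<in>{1..n - 1}. j_primitive n m (tensorA n q r) j
              \<and> gamma_j n m (tensorA n q r) j = k + n - j)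
       \<and> j_primitive n m (tensorA n q r) n \<and> gamma_j n m (tensorA n q r) n = k + n
       \<and> primitive n m (tensorA n q r) \<and> prim_degree n m (tensorA n q r) = k + n"
proof -
  interpret TS n m k q r using assms by unfold_locales
  show ?thesis by (rule main)
qed

end
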